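(* For every formula $A$ of $\mathbf{L_1}$, if $TA$ is valid in first-order predicate logic with equality, then it is not the case that $\dashv_H A$.
   Context: Formulas of $\mathbf{L_1}$: built from atomic formulas $\epsilon ab$ ($a,b$ name variables, possibly equal) with primitive connectives $\vee,\sim$; $\wedge,\supset,\equiv$ defined as usual. Disjunctions may be associated in any way. $\vdash_H A$: $A$ belongs to the smallest set containing all instances of classical propositional tautologies and all formulas $\epsilon ab\supset\epsilon aa$, $(\epsilon ab\wedge\epsilon bc)\supset\epsilon ac$, $(\epsilon ab\wedge\epsilon bb)\supset\epsilon ba$, closed under modus ponens. Positive/negative parts (occurrences): $A$ is a positive part of $A$; if $B\vee C$ is a positive part then $B,C$ are positive parts; if $\sim B$ is a positive part then $B$ is a negative part; if $\sim B$ is a negative part then $B$ is a positive part. $F[B_+,B_-]$ denotes a formula in which some $B$ has one occurrence as positive part and another non-overlapping occurrence as negative part. Hintikka formula: a formula $H$ such that (1) $H$ is not of the form $F[B_+,B_-]$; (2) if $B\vee C$ is a negative part of $H$ then $B$ or $C$ is; (3) if $\epsilon ab$ is a negative part then so is $\epsilon aa$; (4) if $\epsilon ab,\epsilon bc$ are negative parts then so is $\epsilon ac$; (5) if $\epsilon ab,\epsilon bb$ are negative parts then so is $\epsilon ba$. $\mathbf{HAR}$: fix a name variable $a_0$; $\dashv_H$ is the smallest set such that $\dashv_H\epsilon a_0a_0$; $\dashv_H\sim\epsilon a_0a_0$; if $\vdash_H A\supset B$ and $\dashv_H B$ then $\dashv_H A$; if $\dashv_H A$ and $A$ is obtained from $B$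 by uniform substitution of name variables for name variables then $\dashv_H B$; if $A$ is a Hintikka formula that is a disjunction of atomic or negated atomic formulas, $\dashv_H A$, and $\epsilon ab$ is not a negative part of $A$, then $\dashv_H A\vee\epsilon ab$. Translation $T$ into first-order logic with equality, with a monadic predicate $F_a$ for each name variable $a$: $T\epsilon ab=\exists x(F_ax\wedge F_bx)\wedge\forall x\forall y(F_ax\wedge F_ay\supset x=y)$; $T(A\vee B)=TA\vee TB$; $T(\sim A)=\sim TA$. Valid: true in every structure with nonempty domain and $=$ as identity. *)

theory Defs
  imports Main
begin

datatype form = Eps nat nat | Or form form | Neg form

definition And :: "form \<Rightarrow> form \<Rightarrow> form" where
  "And A B = Neg (Or (Neg A) (Neg B))"

definition Imp :: "form \<Rightarrow> form \<Rightarrow> form" where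
  "Imp A B = Or (Neg A) B"

fun nsubst :: "(nat \<Rightarrow> nat) \<Rightarrow> form \<Rightarrow> form" where
  "nsubst s (Eps a b) = Eps (s a) (s b)"
| "nsubst s (Or A B) = Or (nsubst s A) (nsubst s B)"
| "nsubst s (Neg A) = Neg (nsubst s A)"

datatype pform = PVar nat | POr pform pform | PNeg pform

fun peval :: "(nat \<Rightarrow> bool) \<Rightarrow> pform \<Rightarrow> bool" where
  "peval v (PVar n) = v n"
| "peval v (POr P Q) = (peval v P \<or> peval v Q)"
| "peval v (PNeg P) = (\<not> peval v P)"

definition ptaut :: "pform \<Rightarrow> bool" where
  "ptaut P \<longleftrightarrow> (\<forall>v. peval v P)"

fun pinst :: "(nat \<Rightarrow> form) \<Rightarrow> pform \<Rightarrow> form" where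
  "pinst s (PVar n) = s n"
| "pinst s (POr P Q) = Or (pinst s P) (pinst s Q)"
| "pinst s (PNeg P) = Neg (pinst s P)"

definition taut_inst :: "form \<Rightarrow> bool" where
  "taut_inst A \<longleftrightarrow> (\<exists>P s. ptaut P \<and> A = pinst s P)"

inductive hprov :: "form \<Rightarrow> bool" where
  taut: "taut_inst A \<Longrightarrow> hprov A"
| ax1: "hprov (Imp (Eps a b) (Eps a a))"
| ax2: "hprov (Imp (And (Eps a b) (Eps b c)) (Eps a c))"
| ax3: "hprov (Imp (And (Eps a b) (Eps b b)) (Eps b a))"
| mp: "hprov (Imp A B) \<Longrightarrow> hprov A \<Longrightarrow> hprov B"

datatype dir = DL | DR | DN

text \<open>\<open>part H p B pol\<close>: the occurrence of \<open>B\<close> at path \<open>p\<close> in \<open>H\<close> is a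
  positive part (\<open>pol = True\<close>) or a negative part (\<open>pol = False\<close>).\<close>
inductive part :: "form \<Rightarrow> dir list \<Rightarrow> form \<Rightarrow> bool \<Rightarrow> bool" for H where
  root: "part H [] H True"
| orL: "part H p (Or B C) True \<Longrightarrow> part H (p @ [DL]) B True"
| orR: "part H p (Or B C) True \<Longrightarrow> part H (p @ [DR]) C True"
| negP: "part H p (Neg B) True \<Longrightarrow> part H (p @ [DN]) B False"
| negN: "part H p (Neg B) False \<Longrightarrow> part H (p @ [DN]) B True"

definition neg_part :: "form \<Rightarrow> form \<Rightarrow> bool" where
  "neg_part B H \<longleftrightarrow> (\<exists>p. part H p B False)"

definition non_overlapping :: "dir list \<Rightarrow> dir list \<Rightarrow> bool" where
  "non_overlapping p q \<longleftrightarrow> \<not> (\<exists>r. q = p @ r) \<and> \<not> (\<exists>r. p = q @ r)"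

definition has_pos_neg_pair :: "form \<Rightarrow> bool" where
  "has_pos_neg_pair H \<longleftrightarrow>
     (\<exists>B p q. part H p B True \<and> part H q B False \<and> non_overlapping p q)"

definition hintikka :: "form \<Rightarrow> bool" where
  "hintikka H \<longleftrightarrow>
     \<not> has_pos_neg_pair H
   \<and> (\<forall>B C. neg_part (Or B C) H \<longrightarrow> neg_part B H \<or> neg_part C H)
   \<and> (\<forall>a b. neg_part (Eps a b) H \<longrightarrow> neg_part (Eps a a) H)
   \<and> (\<forall>a b c. neg_part (Eps a b) H \<and> neg_part (Eps b c) H \<longrightarrow> neg_part (Eps a c) H)
   \<and> (\<forall>a b. neg_part (Eps a b) H \<and> neg_part (Eps b b) H \<longrightarrow> neg_part (Eps b a) H)"

inductive lit_disj :: "form \<Rightarrow> bool" where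
  atom: "lit_disj (Eps a b)"
| natom: "lit_disj (Neg (Eps a b))"
| disj: "lit_disj A \<Longrightarrow> lit_disj B \<Longrightarrow> lit_disj (Or A B)"

inductive refut :: "nat \<Rightarrow> form \<Rightarrow> bool" for a0 where
  r1: "refut a0 (Eps a0 a0)"
| r2: "refut a0 (Neg (Eps a0 a0))"
| r3: "hprov (Imp A B) \<Longrightarrow> refut a0 B \<Longrightarrow> refut a0 A"
| r4: "refut a0 A \<Longrightarrow> A = nsubst s B \<Longrightarrow> refut a0 B"
| r5: "hintikka A \<Longrightarrow> lit_disj A \<Longrightarrow> refut a0 A \<Longrightarrow> \<not> neg_part (Eps a b) A
       \<Longrightarrow> refut a0 (Or A (Eps a b))"

text \<open>Monadic predicates \<open>F\<^sub>a\<close> indexed by name variables; individual variables are nats.\<close>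
datatype fol = FPred nat nat | FEq nat nat | FNeg fol | FOr fol fol
  | FAnd fol fol | FImp fol fol | FEx nat fol | FAll nat fol

fun feval :: "'d set \<Rightarrow> (nat \<Rightarrow> 'd \<Rightarrow> bool) \<Rightarrow> (nat \<Rightarrow> 'd) \<Rightarrow> fol \<Rightarrow> bool" where
  "feval D I e (FPred a x) = I a (e x)"
| "feval D I e (FEq x y) = (e x = e y)"
| "feval D I e (FNeg \<phi>) = (\<not> feval D I e \<phi>)"
| "feval D I e (FOr \<phi> \<psi>) = (feval D I e \<phi> \<or> feval D I e \<psi>)"
| "feval D I e (FAnd \<phi> \<psi>) = (feval D I e \<phi> \<and> feval D I e \<psi>)"
| "feval D I e (FImp \<phi> \<psi>) = (feval D I e \<phi> \<longrightarrow> feval D I e \<psi>)"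
| "feval D I e (FEx x \<phi>) = (\<exists>d\<in>D. feval D I (e(x := d)) \<phi>)"
| "feval D I e (FAll x \<phi>) = (\<forall>d\<in>D. feval D I (e(x := d)) \<phi>)"

text \<open>Validity: truth in every structure with nonempty domain, \<open>=\<close> interpreted as identity.
  Domains are taken to be nonempty sets of natural numbers (sufficient by
  Loewenheim-Skolem).\<close>
definition fol_valid :: "fol \<Rightarrow> bool" where
  "fol_valid \<phi> \<longleftrightarrow>
     (\<forall>(D::nat set) I e. D \<noteq> {} \<longrightarrow> (\<forall>x. e x \<in> D) \<longrightarrow> feval D I e \<phi>)"

fun T :: "form \<Rightarrow> fol" where
  "T (Eps a b) =
     FAnd (FEx 0 (FAnd (FPred a 0) (FPred b 0)))
          (FAll 0 (FAll 1 (FImp (FAnd (FPred a 0) (FPred a 1)) (FEq 0 1))))"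
| "T (Or A B) = FOr (T A) (T B)"
| "T (Neg A) = FNeg (T A)"

end

theory Submission
  imports Defs
begin

lemma T_pinst: "feval D I e (T (pinst s P)) = peval (\<lambda>n. feval D I e (T (s n))) P"
  by (induction P) auto

lemma hprov_sound: "hprov A \<Longrightarrow> fol_valid (T A)"
proof (induction rule: hprov.induct)
  case (taut A)
  then obtain P s where "ptaut P" "A = pinst s P" unfolding taut_inst_def by blast
  then show ?case unfolding fol_valid_def ptaut_def by (simp add: T_pinst)
next
  case (ax1 a b)
  then show ?case unfolding fol_valid_def Imp_def by auto
next
  case (ax2 a b c)
  show ?case unfolding fol_valid_def Imp_def And_def
    apply simp
    by metis
next
  case (ax3 a b)
  show ?case unfolding fol_valid_def Imp_def And_def
    apply simp
    by metis
next
  case (mp A B)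
  then show ?case unfolding fol_valid_def Imp_def by auto
qed

lemma T_nsubst: "feval D I e (T (nsubst s B)) = feval D (\<lambda>a. I (s a)) e (T B)"
  by (induction B) auto

fun poslits :: "form \<Rightarrow> (nat \<times> nat) set" where
  "poslits (Eps a b) = {(a,b)}"
| "poslits (Or A B) = poslits A \<union> poslits B"
| "poslits (Neg A) = {}"

fun neglits :: "form \<Rightarrow> (nat \<times> nat) set" where
  "neglits (Eps a b) = {}"
| "neglits (Or A B) = neglits A \<union> neglits B"
| "neglits (Neg (Eps a b)) = {(a,b)}"
| "neglits (Neg A) = {}"

lemma lit_eval: "lit_disj A \<Longrightarrow> feval D I e (T A) =
   ((\<exists>(c,d)\<in>poslits A. feval D I e (T (Eps c d))) \<or> (\<exists>(c,d)\<in>neglits A. \<not> feval D I e (T (Eps c d))))"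
proof (induction rule: lit_disj.induct)
  case (atom a b)
  then show ?case by (simp del: T.simps(1))
next
  case (natom a b)
  then show ?case by (simp del: T.simps(1))
next
  case (disj A B)
  then show ?case by (simp del: T.simps(1)) blast
qed

lemma part_lift: "part H p B pol \<Longrightarrow> part H' q H True \<Longrightarrow> part H' (q@p) B pol"
proof (induction rule: part.induct)
  case root
  then show ?case by simp
next
  case (orL p B C)
  then show ?case using part.orL[of H' "q@p" B C] by simp
next
  case (orR p B C)
  then show ?case using part.orR[of H' "q@p" B C] by simp
next
  case (negP p B)
  then show ?case using part.negP[of H' "q@p" B] by simp
next
  case (negN p B)
  then show ?case using part.negN[of H' "q@p" B] by simp
qed

lemma neglits_part: "lit_disj A \<Longrightarrow> (c,d) \<in> neglits A \<Longrightarrow> neg_part (Eps c d) A"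
proof (induction rule: lit_disj.induct)
  case (atom a b)
  then show ?case by simp
next
  case (natom a b)
  then have "part (Neg (Eps a b)) [DN] (Eps c d) False"
    using part.negP[of "Neg (Eps a b)" "[]" "Eps a b"] part.root by simp
  then show ?case unfolding neg_part_def by blast
next
  case (disj A B)
  have r: "part (Or A B) [] (Or A B) True" by (rule part.root)
  show ?case
  proof (cases "(c,d) \<in> neglits A")
    case True
    with disj obtain p where "part A p (Eps c d) False" unfolding neg_part_def by blast
    moreover have "part (Or A B) [DL] A True" using part.orL[OF r] by simp
    ultimately show ?thesis unfolding neg_part_def using part_lift by blast
  next
    case False
    with disj have "(c,d) \<in> neglits B" by simp
    with disj obtain p where "part B p (Eps c d) False" unfolding neg_part_def by blast
    moreover have "part (Or A B) [DR] B True" using part.orR[OF r] by simp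
    ultimately show ?thesis unfolding neg_part_def using part_lift by blast
  qed
qed

inductive_cases ld_or: "lit_disj (Or B C)"
inductive_cases ld_neg: "lit_disj (Neg B)"
inductive_cases ld_eps: "lit_disj (Eps a b)"

lemma part_char: "part A p B pol \<Longrightarrow> lit_disj A \<Longrightarrow>
   (pol \<and> lit_disj B \<and> neglits B \<subseteq> neglits A) \<or>
   (\<not> pol \<and> (\<exists>c d. B = Eps c d \<and> (c,d) \<in> neglits A))"
proof (induction rule: part.induct)
  case root
  then show ?case by simp
next
  case (orL p B C)
  then have "lit_disj (Or B C)" "neglits (Or B C) \<subseteq> neglits A" by simp_all
  then show ?case by (auto elim: ld_or)
next
  case (orR p B C)
  then have "lit_disj (Or B C)" "neglits (Or B C) \<subseteq> neglits A" by simp_all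
  then show ?case by (auto elim: ld_or)
next
  case (negP p B)
  then have "lit_disj (Neg B)" "neglits (Neg B) \<subseteq> neglits A" by simp_all
  then show ?case by (auto elim: ld_neg)
next
  case (negN p B)
  then show ?case by simp
qed

lemma negpart_lits: "lit_disj A \<Longrightarrow> neg_part (Eps c d) A \<Longrightarrow> (c,d) \<in> neglits A"
  unfolding neg_part_def using part_char by blast

lemma T_eps_eval: "feval D I e (T (Eps c d)) =
  ((\<exists>x\<in>D. I c x \<and> I d x) \<and> (\<forall>x\<in>D. \<forall>y\<in>D. I c x \<and> I c y \<longrightarrow> x = y))"
  by simp

lemma canon_model:
  fixes N :: "nat \<Rightarrow> nat \<Rightarrow> bool"
  assumes i: "\<And>c d. N c d \<Longrightarrow> N c c"
    and ii: "\<And>c d e. N c d \<Longrightarrow> N d e \<Longrightarrow> N c e"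
    and iii: "\<And>c d. N c d \<Longrightarrow> N d d \<Longrightarrow> N d c"
  shows "\<exists>I. \<forall>c d e. feval (UNIV::nat set) I e (T (Eps c d)) = N c d"
proof -
  define r where "r c = (LEAST x. N c x \<and> N x c)" for c
  have rI: "N c (r c) \<and> N (r c) c" if "N c c" for c
    unfolding r_def by (rule LeastI[of _ c]) (use that in simp)
  have req: "r c = r d" if "N c d" "N d c" for c d
  proof -
    have "(\<lambda>x. N c x \<and> N x c) = (\<lambda>x. N d x \<and> N x d)"
      using that ii by (intro ext) meson
    then show ?thesis unfolding r_def by simp
  qed
  define I where "I d x = ((N d d \<and> x = 2 * r d) \<or>
       (\<not> N d d \<and> (x = 1 \<or> x = 3 \<or> (\<exists>c. N c c \<and> N c d \<and> x = 2 * r c))))" for d x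
  have Is: "I c x = (x = 2 * r c)" if "N c c" for c x using that unfolding I_def by simp
  have In: "I c x = (x = 1 \<or> x = 3 \<or> (\<exists>c'. N c' c' \<and> N c' c \<and> x = 2 * r c'))"
    if "\<not> N c c" for c x using that unfolding I_def by simp
  have odd1: "2 * x \<noteq> (1::nat)" and odd3: "2 * x \<noteq> (3::nat)" for x by arith+
  have "feval UNIV I e (T (Eps c d)) = N c d" for c d e
  proof (cases "N c c")
    case True
    have uniq: "\<forall>x y. I c x \<and> I c y \<longrightarrow> x = y" using Is[OF True] by simp
    have ex: "(\<exists>x. I c x \<and> I d x) = N c d"
    proof (cases "N d d")
      case Nd: True
      have "(\<exists>x. I c x \<and> I d x) = (2 * r c = 2 * r d)" using Is[OF True] Is[OF Nd] by simp
      also have "\<dots> = (r c = r d)" by simp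
      also have "\<dots> = N c d"
      proof
        assume "r c = r d"
        then show "N c d" using rI[OF True] rI[OF Nd] ii by metis
      next
        assume "N c d"
        then show "r c = r d" using req iii Nd by blast
      qed
      finally show ?thesis .
    next
      case Nd: False
      have "(\<exists>x. I c x \<and> I d x) = (\<exists>c'. N c' c' \<and> N c' d \<and> 2 * r c = 2 * r c')"
        using Is[OF True] In[OF Nd] odd1 odd3 by simp
      also have "\<dots> = (\<exists>c'. N c' c' \<and> N c' d \<and> r c' = r c)" by auto
      also have "\<dots> = N c d"
      proof
        assume "\<exists>c'. N c' c' \<and> N c' d \<and> r c' = r c"
        then obtain c' where "N c' c'" "N c' d" "r c' = r c" by blast
        then show "N c d" using rI[OF True] rI[of c'] ii by metis
      next
        assume "N c d" then show "\<exists>c'. N c' c' \<and> N c' d \<and> r c' = r c" using True by blast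
      qed
      finally show ?thesis .
    qed
    show ?thesis unfolding T_eps_eval using uniq ex by blast
  next
    case False
    have "I c 1" "I c 3" using In[OF False] by simp_all
    then have "\<not> (\<forall>x y. I c x \<and> I c y \<longrightarrow> x = y)" by force
    moreover have "\<not> N c d" using False i by blast
    ultimately show ?thesis unfolding T_eps_eval by blast
  qed
  then have "\<forall>c d e. feval UNIV I e (T (Eps c d)) = N c d" by (intro allI)
  then show ?thesis by blast
qed

lemma refut_invalid: "refut a0 A \<Longrightarrow> \<not> fol_valid (T A)"
proof (induction rule: refut.induct)
  case r1
  show ?case unfolding fol_valid_def
    by (auto intro!: exI[of _ "UNIV"] exI[of _ "\<lambda>_ _. False"] exI[of _ "\<lambda>_. 0"])
next
  case r2
  show ?case unfolding fol_valid_def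
    by (auto intro!: exI[of _ "UNIV"] exI[of _ "\<lambda>_ x. x = (0::nat)"] exI[of _ "\<lambda>_. 0"])
next
  case (r3 A B)
  have "fol_valid (T (Imp A B))" using hprov_sound[OF r3(1)] .
  then have "fol_valid (T A) \<Longrightarrow> fol_valid (T B)" unfolding fol_valid_def Imp_def by simp
  then show ?case using r3.IH by blast
next
  case (r4 A s B)
  then show ?case unfolding fol_valid_def by (auto simp: T_nsubst)
next
  case (r5 A a b)
  define N where "N c d = neg_part (Eps c d) A" for c d
  have h: "hintikka A" by fact
  have hk: "\<forall>a b. neg_part (Eps a b) A \<longrightarrow> neg_part (Eps a a) A"
     "\<forall>a b c. neg_part (Eps a b) A \<and> neg_part (Eps b c) A \<longrightarrow> neg_part (Eps a c) A"
     "\<forall>a b. neg_part (Eps a b) A \<and> neg_part (Eps b b) A \<longrightarrow> neg_part (Eps b a) A"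
    using h[unfolded hintikka_def, THEN conjunct2, THEN conjunct2]
    by (fact conjunct1 conjunct2[THEN conjunct1] conjunct2[THEN conjunct2])+
  have i: "\<And>x y. N x y \<Longrightarrow> N x x" unfolding N_def using hk(1) by blast
  have ii: "\<And>x y z. N x y \<Longrightarrow> N y z \<Longrightarrow> N x z" unfolding N_def using hk(2) by blast
  have iii: "\<And>x y. N x y \<Longrightarrow> N y y \<Longrightarrow> N y x" unfolding N_def using hk(3) by blast
  have ex: "\<exists>I::nat\<Rightarrow>nat\<Rightarrow>bool. \<forall>c d e. feval UNIV I e (T (Eps c d)) = N c d"
    apply (rule canon_model)
    using i ii iii by blast+
  then obtain I :: "nat \<Rightarrow> nat \<Rightarrow> bool" where I0: "\<forall>c d e. feval UNIV I e (T (Eps c d)) = N c d"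
    by (rule exE)
  note I = I0[rule_format]
  have nv: "\<exists>(D::nat set) I' e'. D \<noteq> {} \<and> (\<forall>x. e' x \<in> D) \<and> \<not> feval D I' e' (T A)"
    using r5.IH unfolding fol_valid_def by (simp only: not_all not_imp)
  then obtain D :: "nat set" where "\<exists>I' e'. D \<noteq> {} \<and> (\<forall>x. e' x \<in> D) \<and> \<not> feval D I' e' (T A)"
    by (rule exE)
  then obtain I' where "\<exists>e'. D \<noteq> {} \<and> (\<forall>x. e' x \<in> D) \<and> \<not> feval D I' e' (T A)"
    by (rule exE)
  then obtain e' where M0: "D \<noteq> {} \<and> (\<forall>x. e' x \<in> D) \<and> \<not> feval D I' e' (T A)"
    by (rule exE)
  have M: "D \<noteq> {}" "\<forall>x. e' x \<in> D" "\<not> feval D I' e' (T A)"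
    using M0[THEN conjunct1] M0[THEN conjunct2, THEN conjunct1] M0[THEN conjunct2, THEN conjunct2]
    by this
  have pos: "\<not> N c d" if "(c,d) \<in> poslits A" for c d
  proof
    assume "N c d"
    then have "(c,d) \<in> neglits A" using negpart_lits[OF r5.hyps(2)] unfolding N_def by blast
    then have "feval D I' e' (T (Eps c d))" using M(3) lit_eval[OF r5.hyps(2)] by blast
    moreover have "\<not> feval D I' e' (T (Eps c d))" using M(3) lit_eval[OF r5.hyps(2)] that by blast
    ultimately show False by blast
  qed
  have neg: "N c d" if "(c,d) \<in> neglits A" for c d
    using neglits_part[OF r5.hyps(2) that] unfolding N_def .
  have le: "feval UNIV I (\<lambda>_. 0) (T A) =
   ((\<exists>(c,d)\<in>poslits A. feval UNIV I (\<lambda>_. 0) (T (Eps c d))) \<or>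
    (\<exists>(c,d)\<in>neglits A. \<not> feval UNIV I (\<lambda>_. 0) (T (Eps c d))))"
    by (rule lit_eval[OF r5.hyps(2)])
  have "\<not> feval UNIV I (\<lambda>_. 0) (T A)"
    unfolding le I using pos neg by blast
  moreover have "\<not> N a b" unfolding N_def by fact
  ultimately have "\<not> feval UNIV I (\<lambda>_. 0) (T (Or A (Eps a b)))"
    using I[where c=a and d=b] by (simp only: T.simps(2) feval.simps(4)) blast
  then show ?case unfolding fol_valid_def by blast
qed

theorem theorem6p1:
  fixes a0 :: nat and A :: form
  assumes "fol_valid (T A)"
  shows "\<not> refut a0 A"
  using refut_invalid assms by blast

end
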